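(* Assume $\mathfrak g$ is noncompact and has no nonzero proper $\sigma$-stable ideals. If $Y\in\mathfrak t^+$, then $|\alpha(Y)|<\pi$ for all $\alpha\in\Sigma$.
   Context: Let $G$ be a connected real semisimple Lie group with Lie algebra $\mathfrak g$. Let $\sigma$ be an involution of $G$ and $\theta$ a Cartan involution with $\sigma\theta=\theta\sigma$; the same letters denote the induced involutions of $\mathfrak g$. Let $\mathfrak g=\mathfrak k\oplus\mathfrak m$ and $\mathfrak g=\mathfrak h\oplus\mathfrak q$ be the $\pm1$-eigenspace decompositions for $\theta$ and $\sigma$. Let $\mathfrak t$ be a maximal abelian subspace of $\mathfrak k\cap\mathfrak q$. For a linear form $\alpha:\mathfrak t\to i\mathbb R$ put - $\mathfrak g_\mathbb C(\mathfrak t,\alpha)=\{X\in\mathfrak g_\mathbb C\mid[Y,X]=\alpha(Y)X\ \forall Y\in\mathfrak t\}$, - $\mathfrak m_\mathbb C(\mathfrak t,\alpha)=\mathfrak g_\mathbb C(\mathfrak t,\alpha)\cap\mathfrak m_\mathbb C$. Let $\Sigma=\{\alpha\neq0\mid\mathfrak g_\mathbb C(\mathfrak t,\alpha)\ne\{0\}\}$ and $\Sigma(\mathfrak m_\mathbb C,\mathfrak t)=\{\alpha\ne0\mid\mathfrak m_\mathbb C(\mathfrak t,\alpha)\ne\{0\}\}$. Put $\mathfrak t^+=\{Y\in\mathfrak t\mid|\alpha(Y)|<\pi/2\ \forall\alpha\in\Sigma(\mathfrak m_\mathbb C,\mathfrak t)\}$. *)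

theory Defs
  imports "HOL-Analysis.Analysis"
begin

text \<open>A finite-dimensional real Lie algebra is modelled as the whole of a type
  'a :: euclidean_space equipped with a bracket br.\<close>

definition lie_algebra :: "('a::euclidean_space \<Rightarrow> 'a \<Rightarrow> 'a) \<Rightarrow> bool" where
  "lie_algebra br \<longleftrightarrow> bilinear br \<and> (\<forall>x. br x x = 0) \<and>
     (\<forall>x y z. br x (br y z) + br y (br z x) + br z (br x y) = 0)"

definition ltrace :: "('a::euclidean_space \<Rightarrow> 'a) \<Rightarrow> real" where
  "ltrace f = (\<Sum>b\<in>Basis. inner (f b) b)"

definition killing :: "('a::euclidean_space \<Rightarrow> 'a \<Rightarrow> 'a) \<Rightarrow> 'a \<Rightarrow> 'a \<Rightarrow> real" where
  "killing br X Y = ltrace (\<lambda>Z. br X (br Y Z))"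

text \<open>Semisimple: Killing form nondegenerate (Cartan's criterion, Helgason's definition).\<close>
definition semisimple :: "('a::euclidean_space \<Rightarrow> 'a \<Rightarrow> 'a) \<Rightarrow> bool" where
  "semisimple br \<longleftrightarrow> lie_algebra br \<and> (\<forall>X. (\<forall>Y. killing br X Y = 0) \<longrightarrow> X = 0)"

definition compact_lie :: "('a::euclidean_space \<Rightarrow> 'a \<Rightarrow> 'a) \<Rightarrow> bool" where
  "compact_lie br \<longleftrightarrow> (\<forall>X. X \<noteq> 0 \<longrightarrow> killing br X X < 0)"

definition lie_automorphism :: "('a::euclidean_space \<Rightarrow> 'a \<Rightarrow> 'a) \<Rightarrow> ('a \<Rightarrow> 'a) \<Rightarrow> bool" where
  "lie_automorphism br f \<longleftrightarrow> linear f \<and> bij f \<and> (\<forall>X Y. f (br X Y) = br (f X) (f Y))"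

definition lie_involution :: "('a::euclidean_space \<Rightarrow> 'a \<Rightarrow> 'a) \<Rightarrow> ('a \<Rightarrow> 'a) \<Rightarrow> bool" where
  "lie_involution br f \<longleftrightarrow> lie_automorphism br f \<and> (\<forall>X. f (f X) = X)"

definition cartan_involution :: "('a::euclidean_space \<Rightarrow> 'a \<Rightarrow> 'a) \<Rightarrow> ('a \<Rightarrow> 'a) \<Rightarrow> bool" where
  "cartan_involution br \<theta> \<longleftrightarrow> lie_involution br \<theta> \<and>
     (\<forall>X. X \<noteq> 0 \<longrightarrow> - killing br X (\<theta> X) > 0)"

definition lie_ideal :: "('a::euclidean_space \<Rightarrow> 'a \<Rightarrow> 'a) \<Rightarrow> 'a set \<Rightarrow> bool" where
  "lie_ideal br I \<longleftrightarrow> subspace I \<and> (\<forall>X\<in>I. \<forall>Y. br Y X \<in> I)"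

definition eigsp :: "('a::real_vector \<Rightarrow> 'a) \<Rightarrow> real \<Rightarrow> 'a set" where
  "eigsp f c = {X. f X = c *\<^sub>R X}"

definition abelian_sub :: "('a::euclidean_space \<Rightarrow> 'a \<Rightarrow> 'a) \<Rightarrow> 'a set \<Rightarrow> bool" where
  "abelian_sub br S \<longleftrightarrow> subspace S \<and> (\<forall>X\<in>S. \<forall>Y\<in>S. br X Y = 0)"

definition max_abelian_in :: "('a::euclidean_space \<Rightarrow> 'a \<Rightarrow> 'a) \<Rightarrow> 'a set \<Rightarrow> 'a set \<Rightarrow> bool" where
  "max_abelian_in br t V \<longleftrightarrow> abelian_sub br t \<and> t \<subseteq> V \<and>
     (\<forall>s. abelian_sub br s \<and> t \<subseteq> s \<and> s \<subseteq> V \<longrightarrow> s = t)"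

text \<open>An element X1 + i X2 of g_C is represented by the pair
  (X1, X2); a linear form alpha : t \<rightarrow> i R is represented as alpha = i beta with beta
  a real linear functional (only its restriction to t matters).
  [Y, X1 + i X2] = i beta(Y) (X1 + i X2) unfolds to
  [Y,X1] = -beta(Y) X2 and [Y,X2] = beta(Y) X1.\<close>
definition root_space_C :: "('a::euclidean_space \<Rightarrow> 'a \<Rightarrow> 'a) \<Rightarrow> 'a set \<Rightarrow> ('a \<Rightarrow> real) \<Rightarrow> ('a \<times> 'a) set" where
  "root_space_C br t \<beta> = {(X1, X2). \<forall>Y\<in>t. br Y X1 = - (\<beta> Y) *\<^sub>R X2 \<and> br Y X2 = \<beta> Y *\<^sub>R X1}"

definition roots :: "('a::euclidean_space \<Rightarrow> 'a \<Rightarrow> 'a) \<Rightarrow> 'a set \<Rightarrow> ('a \<Rightarrow> real) set" where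
  "roots br t = {\<beta>. linear \<beta> \<and> (\<exists>Y\<in>t. \<beta> Y \<noteq> 0) \<and> root_space_C br t \<beta> \<noteq> {(0, 0)}}"

definition roots_m :: "('a::euclidean_space \<Rightarrow> 'a \<Rightarrow> 'a) \<Rightarrow> 'a set \<Rightarrow> 'a set \<Rightarrow> ('a \<Rightarrow> real) set" where
  "roots_m br t m = {\<beta>. linear \<beta> \<and> (\<exists>Y\<in>t. \<beta> Y \<noteq> 0) \<and>
       root_space_C br t \<beta> \<inter> (m \<times> m) \<noteq> {(0, 0)}}"

text \<open>t^+ = {Y in t. |alpha(Y)| < pi/2 for all alpha in Sigma(m_C,t)}; note |alpha(Y)| = |beta(Y)|.\<close>
definition t_plus :: "('a::euclidean_space \<Rightarrow> 'a \<Rightarrow> 'a) \<Rightarrow> 'a set \<Rightarrow> 'a set \<Rightarrow> 'a set" where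
  "t_plus br t m = {Y\<in>t. \<forall>\<beta>\<in>roots_m br t m. \<bar>\<beta> Y\<bar> < pi / 2}"

end

theory Submission
  imports Defs "HOL-Analysis.Analysis"
begin


lemma quad_nonneg_zero:
  fixes a Q :: real
  assumes "\<And>e. 0 \<le> 2 * e * a + e * e * Q"
  shows "a = 0"
proof (rule ccontr)
  assume "a \<noteq> 0"
  define e where "e = - a / (\<bar>Q\<bar> + 1)"
  have pos: "\<bar>Q\<bar> + 1 > 0" by simp
  have "0 \<le> 2 * e * a + e * e * Q" by (rule assms)
  hence "0 \<le> (\<bar>Q\<bar> + 1) * (\<bar>Q\<bar> + 1) * (2 * e * a + e * e * Q)" using pos by simp
  also have "\<dots> = 2 * (e * (\<bar>Q\<bar> + 1)) * a * (\<bar>Q\<bar> + 1) + (e * (\<bar>Q\<bar> + 1)) * (e * (\<bar>Q\<bar> + 1)) * Q"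
    by (simp add: algebra_simps)
  also have "e * (\<bar>Q\<bar> + 1) = - a" unfolding e_def using pos by simp
  also have "2 * (- a) * a * (\<bar>Q\<bar> + 1) + (- a) * (- a) * Q = a * a * (Q - 2 * (\<bar>Q\<bar> + 1))"
    by (simp add: algebra_simps)
  finally have "0 \<le> a * a * (Q - 2 * (\<bar>Q\<bar> + 1))" .
  moreover have "a * a > 0" using \<open>a \<noteq> 0\<close> by (metis not_real_square_gt_zero)
  moreover have "Q - 2 * (\<bar>Q\<bar> + 1) < 0" by (cases "Q \<ge> 0") auto
  ultimately show False by (simp add: mult_pos_neg zero_le_mult_iff)
qed

locale symform =
  fixes g :: "'a::euclidean_space \<Rightarrow> 'a \<Rightarrow> real"
  assumes bil: "bilinear g"
    and sym: "\<And>x y. g x y = g y x"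
    and pos: "\<And>x. x \<noteq> 0 \<Longrightarrow> g x x > 0"
begin

lemma ladd: "g (x + y) z = g x z + g y z" using bilinear_ladd[OF bil] .
lemma radd: "g x (y + z) = g x y + g x z" using bilinear_radd[OF bil] .
lemma lsub: "g (x - y) z = g x z - g y z" using bilinear_lsub[OF bil] .
lemma rsub: "g z (x - y) = g z x - g z y" using bilinear_rsub[OF bil] .
lemma lmul: "g (c *\<^sub>R x) y = c * g x y" using bilinear_lmul[OF bil] by simp
lemma rmul: "g x (c *\<^sub>R y) = c * g x y" using bilinear_rmul[OF bil] by simp
lemma lzero: "g 0 y = 0" using bilinear_lzero[OF bil] by simp
lemma rzero: "g x 0 = 0" using bilinear_rzero[OF bil] by simp
lemmas gsimps = ladd radd lsub rsub lmul rmul lzero rzero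

lemma g_self_zero: "g x x = 0 \<longleftrightarrow> x = 0"
  by (metis less_irrefl pos lzero)

lemma rayleigh:
  assumes V: "subspace V" and nz: "V \<noteq> {0}" and S: "linear S" and SV: "\<And>x. x \<in> V \<Longrightarrow> S x \<in> V"
    and Ssym: "\<And>x y. x \<in> V \<Longrightarrow> y \<in> V \<Longrightarrow> g (S x) y = g x (S y)"
  shows "\<exists>x\<in>V. x \<noteq> 0 \<and> (\<exists>c. S x = c *\<^sub>R x)"
proof -
  define K where "K = V \<inter> sphere 0 1"
  have "compact (sphere 0 1 \<inter> V)"
    by (rule compact_Int_closed[OF compact_sphere closed_subspace[OF V]])
  hence "compact K" unfolding K_def by (simp add: Int_commute)
  obtain v where v: "v \<in> V" "v \<noteq> 0" using nz subspace_0[OF V] by blast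
  have "(1 / norm v) *\<^sub>R v \<in> K" unfolding K_def using v subspace_scale[OF V] by auto
  hence Kne: "K \<noteq> {}" by blast
  define R where "R x = g (S x) x / g x x" for x
  have Sc: "continuous_on K S"
    by (rule linear_continuous_on) (use S linear_conv_bounded_linear in blast)
  have c1: "continuous_on K (\<lambda>x. g (S x) x)"
    by (rule bilinear_continuous_on_compose[OF Sc continuous_on_id bil])
  have c2: "continuous_on K (\<lambda>x. g x x)"
    by (rule bilinear_continuous_on_compose[OF continuous_on_id continuous_on_id bil])
  have Knz: "g x x \<noteq> 0" if "x \<in> K" for x
  proof -
    have "x \<noteq> 0" using that unfolding K_def by auto
    then show ?thesis using pos[of x] by simp
  qed
  have "continuous_on K R" unfolding R_def
    by (rule continuous_on_divide[OF c1 c2]) (use Knz in auto)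
  then obtain x0 where x0: "x0 \<in> K" and mx: "\<And>y. y \<in> K \<Longrightarrow> R y \<le> R x0"
    using continuous_attains_sup[OF \<open>compact K\<close> Kne] by blast
  define M where "M = R x0"
  have x0V: "x0 \<in> V" and x0nz: "x0 \<noteq> 0" using x0 unfolding K_def by auto
  have gx0: "g x0 x0 > 0" using pos x0nz by simp
  have Sx0: "g (S x0) x0 = M * g x0 x0" unfolding M_def R_def using gx0 by simp
  have bound: "g (S y) y \<le> M * g y y" if y: "y \<in> V" for y
  proof (cases "y = 0")
    case True then show ?thesis by (simp add: lzero rzero linear_0[OF S])
  next
    case False
    define c where "c = 1 / norm y"
    have c0: "c \<noteq> 0" using False unfolding c_def by simp
    have "c *\<^sub>R y \<in> K" unfolding K_def c_def using y False subspace_scale[OF V] by auto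
    hence "R (c *\<^sub>R y) \<le> M" using mx M_def by simp
    moreover have "R (c *\<^sub>R y) = R y"
      unfolding R_def using c0 by (simp add: linear_scale[OF S] lmul rmul)
    ultimately have "g (S y) y / g y y \<le> M" unfolding R_def by simp
    moreover have "g y y > 0" using pos False by simp
    ultimately show ?thesis by (simp add: divide_le_eq)
  qed
  define w where "w = M *\<^sub>R x0 - S x0"
  have wV: "w \<in> V" unfolding w_def using subspace_diff[OF V] subspace_scale[OF V] x0V SV by blast
  have Swx: "g (S w) x0 = g w (S x0)" using Ssym wV x0V by simp
  have "0 \<le> 2 * e * g w w + e * e * (M * g w w - g (S w) w)" for e
  proof -
    have yV: "x0 + e *\<^sub>R w \<in> V" using subspace_add[OF V] subspace_scale[OF V] x0V wV by blast
    have "g (S (x0 + e *\<^sub>R w)) (x0 + e *\<^sub>R w) \<le> M * g (x0 + e *\<^sub>R w) (x0 + e *\<^sub>R w)"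
      by (rule bound[OF yV])
    hence E: "g (S x0) x0 + e * g (S x0) w + e * g (S w) x0 + e * e * g (S w) w
        \<le> M * (g x0 x0 + e * g x0 w + e * g w x0 + e * e * g w w)"
      by (simp add: linear_add[OF S] linear_scale[OF S] gsimps algebra_simps)
    have gww: "g w w = M * g x0 w - g w (S x0)" by (metis w_def lsub lmul sym)
    have s1: "g w x0 = g x0 w" "g (S x0) w = g w (S x0)" using sym by auto
    have "M * (g x0 x0 + e * g x0 w + e * g w x0 + e * e * g w w)
       - (g (S x0) x0 + e * g (S x0) w + e * g (S w) x0 + e * e * g (S w) w)
       = 2 * e * (M * g x0 w - g w (S x0)) + e * e * (M * g w w - g (S w) w)"
      unfolding s1 Swx Sx0 by (simp add: algebra_simps)
    also have "\<dots> = 2 * e * g w w + e * e * (M * g w w - g (S w) w)" by (simp only: gww)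
    finally show ?thesis using E by linarith
  qed
  hence "g w w = 0" by (rule quad_nonneg_zero)
  hence "w = 0" using g_self_zero by simp
  hence "S x0 = M *\<^sub>R x0" unfolding w_def by simp
  thus ?thesis using x0V x0nz by blast
qed


lemma joint_eig:
  assumes lin: "\<And>S. S \<in> F \<Longrightarrow> linear S"
    and comm: "\<And>S T x. S \<in> F \<Longrightarrow> T \<in> F \<Longrightarrow> S (T x) = T (S x)"
  shows "subspace V \<Longrightarrow> V \<noteq> {0} \<Longrightarrow> (\<And>S x. S \<in> F \<Longrightarrow> x \<in> V \<Longrightarrow> S x \<in> V)
    \<Longrightarrow> (\<And>S x y. S \<in> F \<Longrightarrow> x \<in> V \<Longrightarrow> y \<in> V \<Longrightarrow> g (S x) y = g x (S y))
    \<Longrightarrow> \<exists>x\<in>V. x \<noteq> 0 \<and> (\<forall>S\<in>F. \<exists>c. S x = c *\<^sub>R x)"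
proof (induction "dim V" arbitrary: V rule: less_induct)
  case less
  note V = less.prems(1) and nz = less.prems(2) and inv = less.prems(3) and sy = less.prems(4)
  show ?case
  proof (cases "\<forall>S\<in>F. \<exists>c. \<forall>x\<in>V. S x = c *\<^sub>R x")
    case True
    obtain v where "v \<in> V" "v \<noteq> 0" using nz subspace_0[OF V] by blast
    then show ?thesis using True by blast
  next
    case False
    then obtain S where SF: "S \<in> F" and ns: "\<not> (\<exists>c. \<forall>x\<in>V. S x = c *\<^sub>R x)" by blast
    obtain x s where xV: "x \<in> V" and xnz: "x \<noteq> 0" and xs: "S x = s *\<^sub>R x"
      using rayleigh[OF V nz lin[OF SF]] inv[OF SF] sy[OF SF] by blast
    define V1 where "V1 = {v\<in>V. S v = s *\<^sub>R v}"
    have V1: "subspace V1" unfolding V1_def subspace_def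
      using subspace_0[OF V] subspace_add[OF V] subspace_scale[OF V]
      by (auto simp: linear_0[OF lin[OF SF]] linear_add[OF lin[OF SF]] linear_scale[OF lin[OF SF]] scaleR_add_right)
    have sub: "V1 \<subseteq> V" unfolding V1_def by auto
    have ne: "V1 \<noteq> V" using ns unfolding V1_def by blast
    have eqs: "span V1 = V1" "span V = V" using span_eq_iff[THEN iffD2, OF V1] span_eq_iff[THEN iffD2, OF V] by auto
    have "span V1 \<subset> span V" unfolding eqs using sub ne by blast
    hence "dim V1 < dim V" by (rule dim_psubset)
    moreover have "V1 \<noteq> {0}" using xV xnz xs unfolding V1_def by blast
    moreover have "\<And>T y. T \<in> F \<Longrightarrow> y \<in> V1 \<Longrightarrow> T y \<in> V1"
      unfolding V1_def using inv comm[OF SF] by (auto simp: linear_scale[OF lin])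
    moreover have "\<And>T y z. T \<in> F \<Longrightarrow> y \<in> V1 \<Longrightarrow> z \<in> V1 \<Longrightarrow> g (T y) z = g y (T z)"
      using sy sub by blast
    ultimately obtain y where "y \<in> V1" "y \<noteq> 0" "\<forall>S\<in>F. \<exists>c. S y = c *\<^sub>R y"
      using less.hyps[OF _ V1] by blast
    then show ?thesis using sub by blast
  qed
qed

lemma spec:
  assumes lin: "\<And>S. S \<in> F \<Longrightarrow> linear S"
    and comm: "\<And>S T x. S \<in> F \<Longrightarrow> T \<in> F \<Longrightarrow> S (T x) = T (S x)"
  shows "subspace V \<Longrightarrow> (\<And>S x. S \<in> F \<Longrightarrow> x \<in> V \<Longrightarrow> S x \<in> V)
    \<Longrightarrow> (\<And>S x y. S \<in> F \<Longrightarrow> x \<in> V \<Longrightarrow> y \<in> V \<Longrightarrow> g (S x) y = g x (S y))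
    \<Longrightarrow> V \<subseteq> span {x\<in>V. \<forall>S\<in>F. \<exists>c. S x = c *\<^sub>R x}"
proof (induction "dim V" arbitrary: V rule: less_induct)
  case less
  note V = less.prems(1) and inv = less.prems(2) and sy = less.prems(3)
  show ?case
  proof (cases "V = {0}")
    case True
    then show ?thesis using span_zero by blast
  next
    case False
    obtain x where xV: "x \<in> V" and xnz: "x \<noteq> 0" and xe: "\<forall>S\<in>F. \<exists>c. S x = c *\<^sub>R x"
    proof -
      have "\<exists>x\<in>V. x \<noteq> 0 \<and> (\<forall>S\<in>F. \<exists>c. S x = c *\<^sub>R x)"
        by (rule joint_eig[of F V]) (fact lin comm V False inv sy)+
      thus ?thesis using that by blast
    qed
    define V1 where "V1 = {v\<in>V. g x v = 0}"
    have V1: "subspace V1" unfolding V1_def subspace_def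
      using subspace_0[OF V] subspace_add[OF V] subspace_scale[OF V]
      by (auto simp: gsimps)
    have sub: "V1 \<subseteq> V" unfolding V1_def by auto
    have ne: "V1 \<noteq> V"
    proof
      assume "V1 = V"
      then have "x \<in> V1" using xV by simp
      then show False using pos[OF xnz] unfolding V1_def by simp
    qed
    have eqs: "span V1 = V1" "span V = V" using span_eq_iff[THEN iffD2, OF V1] span_eq_iff[THEN iffD2, OF V] by auto
    have "span V1 \<subset> span V" unfolding eqs using sub ne by blast
    hence "dim V1 < dim V" by (rule dim_psubset)
    moreover have "\<And>T y. T \<in> F \<Longrightarrow> y \<in> V1 \<Longrightarrow> T y \<in> V1"
    proof -
      fix T y assume T: "T \<in> F" and y: "y \<in> V1"
      obtain c where c: "T x = c *\<^sub>R x" using xe T by blast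
      have "g x (T y) = g (T x) y" using sy[OF T xV] y sub by auto
      also have "\<dots> = 0" using c y unfolding V1_def by (simp add: gsimps)
      finally show "T y \<in> V1" using inv[OF T] y unfolding V1_def by auto
    qed
    moreover have "\<And>T y z. T \<in> F \<Longrightarrow> y \<in> V1 \<Longrightarrow> z \<in> V1 \<Longrightarrow> g (T y) z = g y (T z)"
      using sy sub by blast
    ultimately have IH: "V1 \<subseteq> span {x\<in>V1. \<forall>S\<in>F. \<exists>c. S x = c *\<^sub>R x}"
      using less.hyps[OF _ V1] by blast
    have mono: "span {x\<in>V1. \<forall>S\<in>F. \<exists>c. S x = c *\<^sub>R x} \<subseteq> span {x\<in>V. \<forall>S\<in>F. \<exists>c. S x = c *\<^sub>R x}"
      by (rule span_mono) (use sub in auto)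
    show ?thesis
    proof
      fix v assume vV: "v \<in> V"
      define c where "c = g x v / g x x"
      have gxx: "g x x \<noteq> 0" using pos[OF xnz] by simp
      have "v - c *\<^sub>R x \<in> V1" unfolding V1_def
        using vV xV subspace_diff[OF V] subspace_scale[OF V] gxx by (auto simp: c_def gsimps)
      hence "v - c *\<^sub>R x \<in> span {x\<in>V. \<forall>S\<in>F. \<exists>c. S x = c *\<^sub>R x}" using IH mono by blast
      moreover have "c *\<^sub>R x \<in> span {x\<in>V. \<forall>S\<in>F. \<exists>c. S x = c *\<^sub>R x}"
        by (rule span_scale, rule span_base) (use xV xe in auto)
      ultimately have "(v - c *\<^sub>R x) + c *\<^sub>R x \<in> span {x\<in>V. \<forall>S\<in>F. \<exists>c. S x = c *\<^sub>R x}"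
        by (rule span_add)
      thus "v \<in> span {x\<in>V. \<forall>S\<in>F. \<exists>c. S x = c *\<^sub>R x}" by simp
    qed
  qed
qed

end



lemma ltrace_expand:
  assumes f: "linear f"
  shows "ltrace (\<lambda>x. f (h x)) = (\<Sum>b\<in>Basis. \<Sum>c\<in>Basis. (h b \<bullet> c) * (f c \<bullet> b))"
proof -
  have "f (h b) = (\<Sum>c\<in>Basis. (h b \<bullet> c) *\<^sub>R f c)" for b
  proof -
    have "f (h b) = f (\<Sum>c\<in>Basis. (h b \<bullet> c) *\<^sub>R c)" by (simp add: euclidean_representation)
    also have "\<dots> = (\<Sum>c\<in>Basis. (h b \<bullet> c) *\<^sub>R f c)" by (simp add: linear_sum[OF f] linear_scale[OF f])
    finally show ?thesis .
  qed
  then show ?thesis unfolding ltrace_def by (simp add: inner_sum_left)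
qed

lemma ltrace_comm:
  assumes "linear f" "linear h"
  shows "ltrace (\<lambda>x. f (h x)) = ltrace (\<lambda>x. h (f x))"
  unfolding ltrace_expand[OF assms(1)] ltrace_expand[OF assms(2)]
  by (subst sum.swap) (simp add: mult.commute)

lemma ltrace_diff: "ltrace (\<lambda>x. f x - h x) = ltrace f - ltrace h"
  unfolding ltrace_def by (simp add: inner_diff_left sum_subtractf)
lemma ltrace_add: "ltrace (\<lambda>x. f x + h x) = ltrace f + ltrace h"
  unfolding ltrace_def by (simp add: inner_add_left sum.distrib)
lemma ltrace_scale: "ltrace (\<lambda>x. c *\<^sub>R f x) = c * ltrace f"
  unfolding ltrace_def by (simp add: sum_distrib_left)

lemma lin_span:
  assumes f: "linear f" and S: "\<And>x. x \<in> S \<Longrightarrow> f x \<in> span T" and x: "x \<in> span S"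
  shows "f x \<in> span T"
proof -
  have "subspace {x. f x \<in> span T}" unfolding subspace_def
    by (auto simp: linear_0[OF f] linear_add[OF f] linear_scale[OF f] span_zero span_add span_scale)
  hence "span S \<subseteq> {x. f x \<in> span T}" using S by (intro span_minimal) auto
  thus ?thesis using x by auto
qed

locale lie =
  fixes br :: "'a::euclidean_space \<Rightarrow> 'a \<Rightarrow> 'a"
  assumes la: "lie_algebra br"
begin

lemma bil: "bilinear br" using la unfolding lie_algebra_def by simp
lemma linr: "linear (br X)" using bil unfolding bilinear_def by simp
lemma linl: "linear (\<lambda>X. br X Y)" using bil unfolding bilinear_def by simp

lemma br_add_l: "br (x + y) z = br x z + br y z" using bilinear_ladd[OF bil] .
lemma br_add_r: "br x (y + z) = br x y + br x z" using bilinear_radd[OF bil] .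
lemma br_diff_l: "br (x - y) z = br x z - br y z" using bilinear_lsub[OF bil] .
lemma br_diff_r: "br z (x - y) = br z x - br z y" using bilinear_rsub[OF bil] .
lemma br_scale_l: "br (c *\<^sub>R x) y = c *\<^sub>R br x y" using bilinear_lmul[OF bil] .
lemma br_scale_r: "br x (c *\<^sub>R y) = c *\<^sub>R br x y" using bilinear_rmul[OF bil] .
lemma br_zero_l: "br 0 y = 0" using bilinear_lzero[OF bil] .
lemma br_zero_r: "br x 0 = 0" using bilinear_rzero[OF bil] .
lemma br_neg_l: "br (- x) y = - br x y" using bilinear_lneg[OF bil] .
lemma br_neg_r: "br x (- y) = - br x y" using bilinear_rneg[OF bil] .
lemmas brsimps = br_add_l br_add_r br_diff_l br_diff_r br_scale_l br_scale_r br_zero_l br_zero_r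
  br_neg_l br_neg_r

lemma br_self: "br x x = 0" using la unfolding lie_algebra_def by simp

lemma antisym: "br x y = - br y x"
proof -
  have "0 = br (x + y) (x + y)" by (simp add: br_self)
  also have "\<dots> = br x y + br y x" by (simp only: br_add_l br_add_r) (simp add: br_self algebra_simps)
  finally have H: "0 = br x y + br y x" .
  have "br x y = (br x y + br y x) - br y x" by simp
  also have "\<dots> = - br y x" using H by simp
  finally show ?thesis .
qed

lemma jac: "br X (br Y Z) = br (br X Y) Z + br Y (br X Z)"
proof -
  have H: "br X (br Y Z) + br Y (br Z X) + br Z (br X Y) = 0" using la unfolding lie_algebra_def by simp
  have b: "br Y (br Z X) = - br Y (br X Z)" using antisym[of Z X] by (simp add: br_neg_r)
  have c: "br Z (br X Y) = - br (br X Y) Z" by (rule antisym)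
  have "br X (br Y Z) = (br X (br Y Z) + br Y (br Z X) + br Z (br X Y)) - br Y (br Z X) - br Z (br X Y)"
    by simp
  also have "\<dots> = 0 - br Y (br Z X) - br Z (br X Y)" by (simp only: H)
  also have "\<dots> = br (br X Y) Z + br Y (br X Z)" unfolding b c by simp
  finally show ?thesis .
qed

lemma ad_comm: "br X Y = 0 \<Longrightarrow> br X (br Y Z) = br Y (br X Z)"
  using jac[of X Y Z] by (simp add: brsimps)

lemma killing_sym: "killing br X Y = killing br Y X"
  unfolding killing_def by (rule ltrace_comm[OF linr linr])

lemma killing_inv: "killing br (br Z X) W = - killing br X (br Z W)"
proof -
  have e1: "br (br Z X) V = br Z (br X V) - br X (br Z V)" for V using jac[of Z X V] by simp
  have e2: "br X (br (br Z W) V) = br X (br Z (br W V)) - br X (br W (br Z V))" for V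
    using jac[of Z W V] by (simp add: brsimps)
  have "killing br (br Z X) W = ltrace (\<lambda>V. br Z (br X (br W V))) - ltrace (\<lambda>V. br X (br Z (br W V)))"
    unfolding killing_def e1 by (rule ltrace_diff)
  moreover have "killing br X (br Z W) = ltrace (\<lambda>V. br X (br Z (br W V))) - ltrace (\<lambda>V. br X (br W (br Z V)))"
    unfolding killing_def e2 by (rule ltrace_diff)
  moreover have "ltrace (\<lambda>V. br Z (br X (br W V))) = ltrace (\<lambda>V. br X (br W (br Z V)))"
  proof -
    have lc: "linear (\<lambda>V. br X (br W V))"
      using linear_compose[OF linr[of W] linr[of X]] by (simp add: o_def)
    show ?thesis by (rule ltrace_comm[OF linr lc])
  qed
  ultimately show ?thesis by simp
qed

lemma killing_bil: "bilinear (killing br)"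
  unfolding bilinear_def
proof (intro conjI allI)
  fix x show "linear (killing br x)"
    by (rule linearI) (simp_all add: killing_def brsimps ltrace_add ltrace_scale)
next
  fix y show "linear (\<lambda>x. killing br x y)"
    by (rule linearI) (simp_all add: killing_def brsimps ltrace_add ltrace_scale)
qed

end

locale cartan = lie br for br :: "'a::euclidean_space \<Rightarrow> 'a \<Rightarrow> 'a" +
  fixes \<theta> :: "'a \<Rightarrow> 'a"
  assumes cart: "cartan_involution br \<theta>"
begin

lemma th_lin: "linear \<theta>" using cart unfolding cartan_involution_def lie_involution_def lie_automorphism_def by simp
lemma th_hom: "\<theta> (br X Y) = br (\<theta> X) (\<theta> Y)" using cart unfolding cartan_involution_def lie_involution_def lie_automorphism_def by simp
lemma th_inv[simp]: "\<theta> (\<theta> X) = X" using cart unfolding cartan_involution_def lie_involution_def by simp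
lemma th_pos: "X \<noteq> 0 \<Longrightarrow> - killing br X (\<theta> X) > 0" using cart unfolding cartan_involution_def by simp
lemma th_add: "\<theta> (x + y) = \<theta> x + \<theta> y" using linear_add[OF th_lin] .
lemma th_diff: "\<theta> (x - y) = \<theta> x - \<theta> y" using linear_diff[OF th_lin] .
lemma th_scale: "\<theta> (c *\<^sub>R x) = c *\<^sub>R \<theta> x" using linear_scale[OF th_lin] .
lemma th_zero: "\<theta> 0 = 0" using linear_0[OF th_lin] .
lemma th_neg: "\<theta> (- x) = - \<theta> x" using linear_neg[OF th_lin] .
lemmas thsimps = th_add th_diff th_scale th_zero th_neg

lemma killing_theta: "killing br (\<theta> X) (\<theta> Y) = killing br X Y"
proof -
  have e: "br (\<theta> X) (br (\<theta> Y) U) = \<theta> (br X (br Y (\<theta> U)))" for U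
    by (simp add: th_hom)
  have lc: "linear (\<lambda>U. br X (br Y (\<theta> U)))"
    using linear_compose[OF th_lin linear_compose[OF linr[of Y] linr[of X]]] by (simp add: o_def)
  have "killing br (\<theta> X) (\<theta> Y) = ltrace (\<lambda>U. \<theta> (br X (br Y (\<theta> U))))"
    unfolding killing_def e ..
  also have "\<dots> = ltrace (\<lambda>U. br X (br Y (\<theta> (\<theta> U))))" by (rule ltrace_comm[OF th_lin lc])
  also have "\<dots> = killing br X Y" unfolding killing_def by simp
  finally show ?thesis .
qed

definition gi :: "'a \<Rightarrow> 'a \<Rightarrow> real" where "gi X Y = - killing br X (\<theta> Y)"

lemma k_add_l: "killing br (x + y) z = killing br x z + killing br y z" using bilinear_ladd[OF killing_bil] .
lemma k_add_r: "killing br x (y + z) = killing br x y + killing br x z" using bilinear_radd[OF killing_bil] .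
lemma k_scale_l: "killing br (c *\<^sub>R x) y = c * killing br x y" using bilinear_lmul[OF killing_bil] by simp
lemma k_scale_r: "killing br x (c *\<^sub>R y) = c * killing br x y" using bilinear_rmul[OF killing_bil] by simp

lemma gi_symform: "symform gi"
proof
  show "bilinear gi" unfolding bilinear_def
  proof (intro conjI allI)
    fix x show "linear (gi x)"
      by (rule linearI) (simp_all add: gi_def thsimps k_add_r k_scale_r)
  next
    fix y show "linear (\<lambda>x. gi x y)"
      by (rule linearI) (simp_all add: gi_def k_add_l k_scale_l)
  qed
next
  fix x y
  have "killing br y (\<theta> x) = killing br (\<theta> y) (\<theta> (\<theta> x))" by (rule killing_theta[symmetric])
  also have "\<dots> = killing br x (\<theta> y)" using killing_sym by simp
  finally show "gi x y = gi y x" unfolding gi_def by simp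
next
  fix x :: 'a assume "x \<noteq> 0" then show "gi x x > 0" unfolding gi_def using th_pos by simp
qed

lemma gi_skew: "\<theta> Z = Z \<Longrightarrow> gi (br Z X) W = - gi X (br Z W)"
  unfolding gi_def using killing_inv[of Z X "\<theta> W"] by (simp add: th_hom)

end


context cartan begin

lemma m_nonzero:
  assumes "\<not> compact_lie br" shows "\<exists>x. x \<noteq> 0 \<and> \<theta> x = - x"
proof (rule ccontr)
  assume "\<not> ?thesis"
  hence H: "\<theta> x = - x \<Longrightarrow> x = 0" for x by blast
  have "\<theta> x = x" for x
  proof -
    have "\<theta> (x - \<theta> x) = - (x - \<theta> x)" by (simp add: thsimps)
    hence "x - \<theta> x = 0" by (rule H)
    thus ?thesis by simp
  qed
  hence "compact_lie br" unfolding compact_lie_def using th_pos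
    by (metis neg_0_less_iff_less)
  thus False using assms by simp
qed

lemma k_span:
  fixes \<sigma> :: "'a \<Rightarrow> 'a"
  assumes sig: "lie_involution br \<sigma>"
    and comm: "\<sigma> \<circ> \<theta> = \<theta> \<circ> \<sigma>"
    and noncpt: "\<not> compact_lie br"
    and irred: "\<And>I. lie_ideal br I \<Longrightarrow> \<sigma> ` I \<subseteq> I \<Longrightarrow> I = {0} \<or> I = UNIV"
    and z: "\<theta> z = z"
  shows "z \<in> span {br a b | a b. \<theta> a = - a \<and> \<theta> b = - b}"
proof -
  define Ms where "Ms = {x. \<theta> x = - x}"
  define P where "P = {br a b | a b. \<theta> a = - a \<and> \<theta> b = - b}"
  define I where "I = span (Ms \<union> P)"
  have sl: "linear \<sigma>" and sh: "\<And>X Y. \<sigma> (br X Y) = br (\<sigma> X) (\<sigma> Y)"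
    using sig unfolding lie_involution_def lie_automorphism_def by auto
  have st: "\<sigma> (\<theta> x) = \<theta> (\<sigma> x)" for x using comm by (metis comp_apply)
  have decomp: "Y = (1/2) *\<^sub>R (Y + \<theta> Y) + (1/2) *\<^sub>R (Y - \<theta> Y)" for Y
  proof -
    have "(Y + \<theta> Y) + (Y - \<theta> Y) = 2 *\<^sub>R Y" by (simp add: scaleR_2)
    hence "(1/2) *\<^sub>R ((Y + \<theta> Y) + (Y - \<theta> Y)) = Y" by simp
    thus ?thesis by (simp only: scaleR_add_right)
  qed
  have kpart: "\<theta> ((1/2) *\<^sub>R (Y + \<theta> Y)) = (1/2) *\<^sub>R (Y + \<theta> Y)" for Y by (simp add: thsimps add.commute)
  have mpart: "\<theta> ((1/2) *\<^sub>R (Y - \<theta> Y)) = - ((1/2) *\<^sub>R (Y - \<theta> Y))" for Y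
    by (simp add: thsimps flip: scaleR_minus_right)
  have inI: "x \<in> Ms \<Longrightarrow> x \<in> I" "x \<in> P \<Longrightarrow> x \<in> I" for x unfolding I_def by (auto intro: span_base)
  have brI: "br Y X \<in> I" if X: "X \<in> Ms \<union> P" for X Y
  proof -
    define Yk where "Yk = (1/2) *\<^sub>R (Y + \<theta> Y)"
    define Ym where "Ym = (1/2) *\<^sub>R (Y - \<theta> Y)"
    have Yk: "\<theta> Yk = Yk" and Ym: "\<theta> Ym = - Ym" unfolding Yk_def Ym_def using kpart mpart by auto
    have Y: "Y = Yk + Ym" unfolding Yk_def Ym_def by (rule decomp)
    have "br Yk X \<in> I \<and> br Ym X \<in> I"
    proof (cases "X \<in> Ms")
      case True
      hence tX: "\<theta> X = - X" unfolding Ms_def by simp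
      have "br Yk X \<in> Ms" unfolding Ms_def using Yk tX by (simp add: th_hom brsimps)
      moreover have "br Ym X \<in> P" unfolding P_def using Ym tX by blast
      ultimately show ?thesis using inI by blast
    next
      case False
      with X obtain a b where X: "X = br a b" and a: "\<theta> a = - a" and b: "\<theta> b = - b"
        unfolding P_def by blast
      have "br Ym X \<in> Ms" unfolding Ms_def X using Ym a b by (simp add: th_hom brsimps)
      moreover have "br Yk X \<in> I"
      proof -
        have "br Yk X = br (br Yk a) b + br a (br Yk b)" unfolding X by (rule jac)
        moreover have "br (br Yk a) b \<in> P" unfolding P_def using Yk a b by (force simp: th_hom brsimps)
        moreover have "br a (br Yk b) \<in> P" unfolding P_def using Yk a b by (force simp: th_hom brsimps)
        ultimately show ?thesis using inI unfolding I_def by (metis span_add)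
      qed
      ultimately show ?thesis using inI by blast
    qed
    thus ?thesis unfolding I_def using Y by (metis br_add_l span_add)
  qed
  have ideal: "lie_ideal br I" unfolding lie_ideal_def
  proof (intro conjI ballI allI)
    show "subspace I" unfolding I_def by (rule subspace_span)
  next
    fix X Y assume "X \<in> I"
    thus "br Y X \<in> I" unfolding I_def by (rule lin_span[OF linr, rotated]) (use brI I_def in auto)
  qed
  have stab: "\<sigma> ` I \<subseteq> I"
  proof
    fix y assume "y \<in> \<sigma> ` I"
    then obtain x where x: "x \<in> I" and y: "y = \<sigma> x" by blast
    have "\<sigma> w \<in> span (Ms \<union> P)" if w: "w \<in> Ms \<union> P" for w
    proof (cases "w \<in> Ms")
      case True
      hence "\<sigma> w \<in> Ms" unfolding Ms_def using st[of w] by (simp add: linear_neg[OF sl])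
      then show ?thesis by (auto intro: span_base)
    next
      case False
      with w obtain a b where "w = br a b" and a: "\<theta> a = - a" and b: "\<theta> b = - b"
        unfolding P_def by blast
      hence "\<sigma> w = br (\<sigma> a) (\<sigma> b)" using sh by simp
      moreover have "\<theta> (\<sigma> a) = - \<sigma> a" "\<theta> (\<sigma> b) = - \<sigma> b"
        using st a b by (simp_all add: linear_neg[OF sl] flip: st)
      ultimately have "\<sigma> w \<in> P" unfolding P_def by blast
      then show ?thesis by (auto intro: span_base)
    qed
    note sw = this
    have "\<sigma> x \<in> span (Ms \<union> P)" using lin_span[OF sl, of "Ms \<union> P" "Ms \<union> P" x] sw x unfolding I_def by blast
    thus "y \<in> I" using y unfolding I_def by simp
  qed
  obtain x where "x \<noteq> 0" "\<theta> x = - x" using m_nonzero[OF noncpt] by blast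
  hence "x \<in> I" using inI unfolding Ms_def by blast
  hence "I \<noteq> {0}" using \<open>x \<noteq> 0\<close> by blast
  hence "I = UNIV" using irred[OF ideal stab] by blast
  hence "z \<in> span (Ms \<union> P)" unfolding I_def by simp
  then obtain a s where zas: "z = a + s" and a: "a \<in> span Ms" and s: "s \<in> span P"
    unfolding span_Un by blast
  have subM: "subspace Ms" unfolding Ms_def subspace_def by (auto simp: thsimps)
  have aM: "\<theta> a = - a" using a span_eq_iff[THEN iffD2, OF subM] unfolding Ms_def by auto
  have subK: "subspace {x. \<theta> x = x}" unfolding subspace_def by (auto simp: thsimps)
  have "P \<subseteq> {x. \<theta> x = x}" unfolding P_def by (auto simp: th_hom brsimps)
  hence "span P \<subseteq> {x. \<theta> x = x}" using span_minimal subK by blast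
  hence sK: "\<theta> s = s" using s by auto
  have "\<theta> a = a" using z sK unfolding zas by (simp add: thsimps)
  with aM have "a = - a" by simp
  hence "a + a = 0" by (metis eq_neg_iff_add_eq_0)
  hence "(2::real) *\<^sub>R a = 0" by (simp add: scaleR_2)
  hence "a = 0" by simp
  thus ?thesis using s zas P_def by simp
qed

end


lemma lc: fixes w d :: "'a::real_vector" and p q :: real
  shows "(-(p+q)) *\<^sub>R ((-(p+q)) *\<^sub>R w + 2 *\<^sub>R d) + 2 *\<^sub>R ((-(p+q)) *\<^sub>R d + (2*p*q) *\<^sub>R w) + (2*(p+q)) *\<^sub>R ((-(p+q)) *\<^sub>R w + 2 *\<^sub>R d) + ((p-q)*(p-q)) *\<^sub>R w = 0"
proof -
  have "?thesis \<longleftrightarrow> ((-(p+q))*(-(p+q)) + 2*(2*p*q) + (2*(p+q))*(-(p+q)) + (p-q)*(p-q)) *\<^sub>R w + ((-(p+q))*2 + 2*(-(p+q)) + (2*(p+q))*2) *\<^sub>R d = 0"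
    by (simp only: scaleR_add_right scaleR_scaleR scaleR_add_left add_ac)
  moreover have "((-(p+q))*(-(p+q)) + 2*(2*p*q) + (2*(p+q))*(-(p+q)) + (p-q)*(p-q)) = 0" by (simp add: algebra_simps)
  moreover have "((-(p+q))*2 + 2*(-(p+q)) + (2*(p+q))*2) = 0" by (simp add: algebra_simps)
  ultimately show ?thesis by simp
qed

lemma real_factor_ne:
  fixes p q B :: real
  assumes hp: "p \<ge> 0" and hq: "q \<ge> 0" and sp: "sqrt p < pi / 2" and sq: "sqrt q < pi / 2"
    and B: "B \<ge> pi * pi"
  shows "B * B - 2 * (p + q) * B + (p - q) * (p - q) \<noteq> 0"
proof -
  define u where "u = sqrt p"
  define v where "v = sqrt q"
  have u0: "u \<ge> 0" and v0: "v \<ge> 0" unfolding u_def v_def using hp hq by auto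
  have pu: "p = u * u" and qv: "q = v * v" unfolding u_def v_def using hp hq by (simp_all add: real_sqrt_mult[symmetric])
  have "u + v < pi" using sp sq unfolding u_def v_def by simp
  hence "(u + v) * (u + v) < pi * pi" using u0 v0 by (simp add: mult_strict_mono)
  hence f1: "B - (u + v) * (u + v) > 0" using B by simp
  have "(u - v) * (u - v) \<le> (u + v) * (u + v)" using u0 v0 by (simp add: algebra_simps)
  hence f2: "B - (u - v) * (u - v) > 0" using f1 by simp
  have "B * B - 2 * (p + q) * B + (p - q) * (p - q) = (B - (u + v) * (u + v)) * (B - (u - v) * (u - v))"
    unfolding pu qv by (simp add: algebra_simps)
  also have "\<dots> > 0" using f1 f2 by simp
  finally show ?thesis by simp
qed

sublocale cartan \<subseteq> G: symform gi by (rule gi_symform)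

context cartan begin

lemma gi_nonneg: "gi u u \<ge> 0"
  by (cases "u = 0") (simp_all add: G.lzero less_imp_le G.pos)

lemma deriv2: "br Y (br Y (br u v)) = br (br Y (br Y u)) v + 2 *\<^sub>R br (br Y u) (br Y v) + br u (br Y (br Y v))"
proof -
  have "br Y (br Y (br u v)) = br Y (br (br Y u) v + br u (br Y v))" by (simp only: jac[of Y u v])
  also have "\<dots> = br (br Y (br Y u)) v + br (br Y u) (br Y v) + (br (br Y u) (br Y v) + br u (br Y (br Y v)))"
    by (simp only: br_add_r jac[of Y "br Y u" v] jac[of Y u "br Y v"])
  also have "\<dots> = br (br Y (br Y u)) v + 2 *\<^sub>R br (br Y u) (br Y v) + br u (br Y (br Y v))"
    by (simp add: scaleR_2 algebra_simps)
  finally show ?thesis .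
qed

lemma bracket_poly:
  assumes x: "br Y (br Y x) = (- p) *\<^sub>R x" and y: "br Y (br Y y) = (- q) *\<^sub>R y"
  defines "w \<equiv> br x y"
  shows "br Y (br Y (br Y (br Y w))) + (2 * (p + q)) *\<^sub>R br Y (br Y w) + ((p - q) * (p - q)) *\<^sub>R w = 0"
proof -
  define d where "d = br (br Y x) (br Y y)"
  have x3: "br Y (br Y (br Y x)) = (- p) *\<^sub>R br Y x" using x by (simp add: brsimps)
  have y3: "br Y (br Y (br Y y)) = (- q) *\<^sub>R br Y y" using y by (simp add: brsimps)
  have Aw0: "br Y (br Y w) = br (br Y (br Y x)) y + 2 *\<^sub>R br (br Y x) (br Y y) + br x (br Y (br Y y))"
    unfolding w_def by (rule deriv2)
  have Aw: "br Y (br Y w) = (- (p + q)) *\<^sub>R w + 2 *\<^sub>R d"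
    unfolding Aw0 x y by (simp add: brsimps algebra_simps scaleR_left_distrib w_def[symmetric] d_def[symmetric])
  have Ad0: "br Y (br Y d) = br (br Y (br Y (br Y x))) (br Y y) + 2 *\<^sub>R br (br Y (br Y x)) (br Y (br Y y))
      + br (br Y x) (br Y (br Y (br Y y)))"
    unfolding d_def by (rule deriv2)
  have Ad: "br Y (br Y d) = (- (p + q)) *\<^sub>R d + (2 * p * q) *\<^sub>R w"
    unfolding Ad0 x3 y3 x y by (simp add: brsimps algebra_simps scaleR_left_distrib w_def[symmetric] d_def[symmetric])
  have AAw: "br Y (br Y (br Y (br Y w))) = (-(p+q)) *\<^sub>R ((-(p+q)) *\<^sub>R w + 2 *\<^sub>R d) + 2 *\<^sub>R ((-(p+q)) *\<^sub>R d + (2*p*q) *\<^sub>R w)"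
  proof -
    have "br Y (br Y (br Y (br Y w))) = br Y (br Y ((-(p+q)) *\<^sub>R w + 2 *\<^sub>R d))" by (simp only: Aw)
    also have "\<dots> = (-(p+q)) *\<^sub>R br Y (br Y w) + 2 *\<^sub>R br Y (br Y d)" by (simp only: brsimps)
    also have "\<dots> = (-(p+q)) *\<^sub>R ((-(p+q)) *\<^sub>R w + 2 *\<^sub>R d) + 2 *\<^sub>R ((-(p+q)) *\<^sub>R d + (2*p*q) *\<^sub>R w)"
      by (simp only: Aw Ad)
    finally show ?thesis .
  qed
  have "br Y (br Y (br Y (br Y w))) + (2 * (p + q)) *\<^sub>R br Y (br Y w) + ((p - q) * (p - q)) *\<^sub>R w
     = (-(p+q)) *\<^sub>R ((-(p+q)) *\<^sub>R w + 2 *\<^sub>R d) + 2 *\<^sub>R ((-(p+q)) *\<^sub>R d + (2*p*q) *\<^sub>R w) + (2*(p+q)) *\<^sub>R ((-(p+q)) *\<^sub>R w + 2 *\<^sub>R d) + ((p-q)*(p-q)) *\<^sub>R w"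
    unfolding AAw by (simp only: Aw)
  also have "\<dots> = 0" by (rule lc)
  finally show ?thesis .
qed

end


context cartan begin

lemma stepA:
  assumes tab: "\<And>Z1 Z2. Z1 \<in> t \<Longrightarrow> Z2 \<in> t \<Longrightarrow> br Z1 Z2 = 0"
    and tk: "\<And>Z. Z \<in> t \<Longrightarrow> \<theta> Z = Z"
    and Yt: "Y \<in> t"
    and troot: "\<And>\<beta>. \<beta> \<in> roots_m br t (eigsp \<theta> (-1)) \<Longrightarrow> \<bar>\<beta> Y\<bar> < pi/2"
    and xm: "\<theta> x = - x" and xnz: "x \<noteq> 0" and xc: "br Y (br Y x) = c *\<^sub>R x"
  shows "c \<le> 0 \<and> sqrt (- c) < pi/2"
proof -
  have skewY: "gi (br Y u) v = - gi u (br Y v)" for u v using gi_skew tk[OF Yt] by blast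
  have "c * gi x x = gi (br Y (br Y x)) x" unfolding xc by (simp add: G.lmul)
  also have "\<dots> = - gi (br Y x) (br Y x)" by (rule skewY)
  also have "\<dots> \<le> 0" using gi_nonneg by simp
  finally have "c * gi x x \<le> 0" .
  moreover have gxx: "gi x x > 0" using G.pos[OF xnz] .
  ultimately have c0: "c \<le> 0" by (simp add: mult_le_0_iff)
  moreover have "sqrt (- c) < pi/2"
  proof (rule ccontr)
    assume "\<not> sqrt (- c) < pi/2"
    define l where "l = sqrt (- c)"
    have lge: "l \<ge> pi/2" using \<open>\<not> sqrt (- c) < pi/2\<close> unfolding l_def by simp
    have l0: "l > 0" using lge pi_gt_zero by linarith
    have cl: "c = - (l * l)" unfolding l_def using c0 by simp
    have comY: "br Z (br Y u) = br Y (br Z u)" if "Z \<in> t" for Z u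
      using ad_comm[OF tab[OF that Yt]] .
    have comZ: "br Z (br Z' u) = br Z' (br Z u)" if "Z \<in> t" "Z' \<in> t" for Z Z' u
      using ad_comm[OF tab[OF that]] .
    define E where "E = {v. \<theta> v = - v \<and> br Y (br Y v) = c *\<^sub>R v}"
    define F where "F = (\<lambda>Z v. br Z (br Y v)) ` t"
    have Esub: "subspace E" unfolding E_def subspace_def by (auto simp: thsimps brsimps algebra_simps)
    have xE: "x \<in> E" unfolding E_def using xm xc by simp
    hence Enz: "E \<noteq> {0}" using xnz by blast
    have Flin: "linear S" if "S \<in> F" for S
    proof -
      obtain Z where "S = (\<lambda>v. br Z (br Y v))" using \<open>S \<in> F\<close> unfolding F_def by blast
      then show ?thesis using linear_compose[OF linr[of Y] linr[of Z]] by (simp add: o_def)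
    qed
    have Fcomm: "S (T u) = T (S u)" if "S \<in> F" "T \<in> F" for S T u
    proof -
      obtain Z where Z: "Z \<in> t" "S = (\<lambda>v. br Z (br Y v))" using \<open>S \<in> F\<close> unfolding F_def by blast
      obtain Z' where Z': "Z' \<in> t" "T = (\<lambda>v. br Z' (br Y v))" using \<open>T \<in> F\<close> unfolding F_def by blast
      have "br Z (br Y (br Z' (br Y u))) = br Z (br Z' (br Y (br Y u)))" using comY[OF Z'(1)] by simp
      also have "\<dots> = br Z' (br Z (br Y (br Y u)))" using comZ[OF Z(1) Z'(1)] by simp
      also have "\<dots> = br Z' (br Y (br Z (br Y u)))" using comY[OF Z(1)] by simp
      finally show ?thesis using Z Z' by simp
    qed
    have Finv: "S v \<in> E" if "S \<in> F" "v \<in> E" for S v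
    proof -
      obtain Z where Z: "Z \<in> t" "S = (\<lambda>v. br Z (br Y v))" using \<open>S \<in> F\<close> unfolding F_def by blast
      have v: "\<theta> v = - v" "br Y (br Y v) = c *\<^sub>R v" using \<open>v \<in> E\<close> unfolding E_def by auto
      have "\<theta> (br Z (br Y v)) = - br Z (br Y v)"
        using tk[OF Z(1)] tk[OF Yt] v by (simp add: th_hom brsimps)
      moreover have "br Y (br Y (br Z (br Y v))) = c *\<^sub>R br Z (br Y v)"
      proof -
        have "br Y (br Y (br Z (br Y v))) = br Z (br Y (br Y (br Y v)))" using comY[OF Z(1)] by simp
        also have "\<dots> = c *\<^sub>R br Z (br Y v)" using v by (simp add: brsimps)
        finally show ?thesis .
      qed
      ultimately show ?thesis unfolding E_def Z by simp
    qed
    have Fsym: "gi (S u) v = gi u (S v)" if "S \<in> F" "u \<in> E" "v \<in> E" for S u v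
    proof -
      obtain Z where Z: "Z \<in> t" "S = (\<lambda>v. br Z (br Y v))" using \<open>S \<in> F\<close> unfolding F_def by blast
      have "gi (br Z (br Y u)) v = - gi (br Y u) (br Z v)" using gi_skew tk[OF Z(1)] by blast
      also have "\<dots> = gi u (br Y (br Z v))" using skewY by simp
      also have "\<dots> = gi u (br Z (br Y v))" using comY[OF Z(1)] by simp
      finally show ?thesis using Z by simp
    qed
    have "\<exists>x\<in>E. x \<noteq> 0 \<and> (\<forall>S\<in>F. \<exists>c. S x = c *\<^sub>R x)"
      by (rule G.joint_eig[of F E]) (fact Flin Fcomm Esub Enz Finv Fsym)+
    then obtain X1 where X1E: "X1 \<in> E" and X1nz: "X1 \<noteq> 0" and X1j: "\<forall>S\<in>F. \<exists>c. S X1 = c *\<^sub>R X1"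
      by blast
    have X1m: "\<theta> X1 = - X1" and X1c: "br Y (br Y X1) = c *\<^sub>R X1" using X1E unfolding E_def by auto
    have jZ: "\<exists>s. br Z (br Y X1) = s *\<^sub>R X1" if "Z \<in> t" for Z
      using X1j that unfolding F_def by auto
    define X2 where "X2 = (1 / l) *\<^sub>R br Y X1"
    have g11: "gi X1 X1 > 0" using G.pos[OF X1nz] .
    define \<beta> where "\<beta> = (\<lambda>Z. gi (br Z X2) X1 / gi X1 X1)"
    have hZ2: "br Z X2 = \<beta> Z *\<^sub>R X1" if Zt: "Z \<in> t" for Z
    proof -
      obtain s where s: "br Z (br Y X1) = s *\<^sub>R X1" using jZ[OF Zt] by blast
      have e: "br Z X2 = (s / l) *\<^sub>R X1" unfolding X2_def by (simp add: brsimps s)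
      have "\<beta> Z = s / l" unfolding \<beta>_def e using g11 by (simp add: G.lmul)
      then show ?thesis using e by simp
    qed
    have AX2: "br Y X2 = (- l) *\<^sub>R X1"
      unfolding X2_def using l0 by (simp add: brsimps X1c cl)
    have X1eq: "X1 = (- 1 / l) *\<^sub>R br Y X2" unfolding AX2 using l0 by simp
    have hZ1: "br Z X1 = - \<beta> Z *\<^sub>R X2" if "Z \<in> t" for Z
    proof -
      have "br Z X1 = (- 1 / l) *\<^sub>R br Z (br Y X2)" by (subst X1eq) (simp add: brsimps)
      also have "\<dots> = (- 1 / l) *\<^sub>R br Y (br Z X2)" using comY[OF that] by simp
      also have "\<dots> = (- 1 / l) *\<^sub>R br Y (\<beta> Z *\<^sub>R X1)" by (simp only: hZ2[OF that])
      also have "\<dots> = - \<beta> Z *\<^sub>R X2" unfolding X2_def by (simp add: brsimps)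
      finally show ?thesis .
    qed
    have bY: "\<beta> Y = - l" unfolding \<beta>_def AX2 using g11 by (simp add: G.lmul bilinear_lneg[OF G.bil])
    have blin: "linear \<beta>" unfolding \<beta>_def
      by (rule linearI) (simp_all add: brsimps G.gsimps add_divide_distrib)
    have X2m: "\<theta> X2 = - X2" unfolding X2_def using tk[OF Yt] X1m by (simp add: thsimps th_hom brsimps)
    have "\<beta> \<in> roots_m br t (eigsp \<theta> (-1))"
      unfolding roots_m_def
    proof (intro CollectI conjI)
      show "linear \<beta>" by (rule blin)
      show "\<exists>Y\<in>t. \<beta> Y \<noteq> 0" using Yt bY l0 by (intro bexI[of _ Y]) simp_all
      have "(X1, X2) \<in> root_space_C br t \<beta> \<inter> eigsp \<theta> (- 1) \<times> eigsp \<theta> (- 1)"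
        unfolding root_space_C_def eigsp_def using hZ1 hZ2 X1m X2m by auto
      then show "root_space_C br t \<beta> \<inter> eigsp \<theta> (- 1) \<times> eigsp \<theta> (- 1) \<noteq> {(0, 0)}"
        using X1nz by auto
    qed
    hence "\<bar>\<beta> Y\<bar> < pi/2" by (rule troot)
    thus False using bY lge l0 by simp
  qed
  ultimately show ?thesis by simp
qed

end


context cartan begin

lemma stepB:
  fixes \<sigma> :: "'a \<Rightarrow> 'a"
  assumes tab: "\<And>Z1 Z2. Z1 \<in> t \<Longrightarrow> Z2 \<in> t \<Longrightarrow> br Z1 Z2 = 0"
    and tk: "\<And>Z. Z \<in> t \<Longrightarrow> \<theta> Z = Z"
    and Yt: "Y \<in> t"
    and troot: "\<And>\<beta>. \<beta> \<in> roots_m br t (eigsp \<theta> (-1)) \<Longrightarrow> \<bar>\<beta> Y\<bar> < pi/2"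
    and sig: "lie_involution br \<sigma>"
    and comm: "\<sigma> \<circ> \<theta> = \<theta> \<circ> \<sigma>"
    and noncpt: "\<not> compact_lie br"
    and irred: "\<And>I. lie_ideal br I \<Longrightarrow> \<sigma> ` I \<subseteq> I \<Longrightarrow> I = {0} \<or> I = UNIV"
    and zk: "\<theta> z = z" and znz: "z \<noteq> 0" and zc: "br Y (br Y z) = (- (b * b)) *\<^sub>R z"
  shows "b * b < pi * pi"
proof (rule ccontr)
  assume "\<not> b * b < pi * pi"
  hence Bge: "b * b \<ge> pi * pi" by simp
  have skewY: "gi (br Y u) v = - gi u (br Y v)" for u v using gi_skew tk[OF Yt] by blast
  have AAsym: "gi (br Y (br Y u)) v = gi u (br Y (br Y v))" for u v using skewY by simp
  define EMs where "EMs = {x. \<theta> x = - x \<and> (\<exists>c. br Y (br Y x) = c *\<^sub>R x)}"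
  define Ms where "Ms = {x. \<theta> x = - x}"
  define F where "F = {(\<lambda>v. br Y (br Y v))}"
  have MsE: "Ms \<subseteq> span EMs"
  proof -
    have sub: "subspace Ms" unfolding Ms_def subspace_def by (auto simp: thsimps)
    have lin: "linear S" if "S \<in> F" for S
      using that linear_compose[OF linr[of Y] linr[of Y]] unfolding F_def by (simp add: o_def)
    have cm: "S (T u) = T (S u)" if "S \<in> F" "T \<in> F" for S T u using that unfolding F_def by simp
    have inv: "S u \<in> Ms" if "S \<in> F" "u \<in> Ms" for S u
      using that tk[OF Yt] unfolding F_def Ms_def by (simp add: th_hom brsimps)
    have sy: "gi (S u) v = gi u (S v)" if "S \<in> F" "u \<in> Ms" "v \<in> Ms" for S u v
      using that AAsym unfolding F_def by simp
    have "Ms \<subseteq> span {x\<in>Ms. \<forall>S\<in>F. \<exists>c. S x = c *\<^sub>R x}"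
      by (rule G.spec[of F Ms]) (fact lin cm sub inv sy)+
    moreover have "{x\<in>Ms. \<forall>S\<in>F. \<exists>c. S x = c *\<^sub>R x} = EMs" unfolding EMs_def Ms_def F_def by auto
    ultimately show ?thesis by simp
  qed
  define Q where "Q = {br x y | x y. x \<in> EMs \<and> y \<in> EMs}"
  have Q0: "gi z w = 0" if "w \<in> Q" for w
  proof -
    obtain x y where w: "w = br x y" and x: "x \<in> EMs" and y: "y \<in> EMs" using \<open>w \<in> Q\<close> unfolding Q_def by blast
    obtain cx where xm: "\<theta> x = - x" and cx: "br Y (br Y x) = cx *\<^sub>R x" using x unfolding EMs_def by blast
    obtain cy where ym: "\<theta> y = - y" and cy: "br Y (br Y y) = cy *\<^sub>R y" using y unfolding EMs_def by blast
    show ?thesis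
    proof (cases "x = 0 \<or> y = 0")
      case True
      then show ?thesis using w by (auto simp: brsimps G.rzero)
    next
      case False
      have xnz: "x \<noteq> 0" and ynz: "y \<noteq> 0" using False by auto
      have ax: "cx \<le> 0 \<and> sqrt (- cx) < pi/2"
        by (rule stepA[where t=t and Y=Y and x=x and c=cx]) (fact tab tk Yt troot xm xnz cx)+
      have ay: "cy \<le> 0 \<and> sqrt (- cy) < pi/2"
        by (rule stepA[where t=t and Y=Y and x=y and c=cy]) (fact tab tk Yt troot ym ynz cy)+
      define p where "p = - cx"
      define q where "q = - cy"
      have xp: "br Y (br Y x) = (- p) *\<^sub>R x" using cx unfolding p_def by simp
      have yq: "br Y (br Y y) = (- q) *\<^sub>R y" using cy unfolding q_def by simp
      have poly: "br Y (br Y (br Y (br Y w))) + (2 * (p + q)) *\<^sub>R br Y (br Y w) + ((p - q) * (p - q)) *\<^sub>R w = 0"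
        unfolding w by (rule bracket_poly[OF xp yq])
      have g1: "gi z (br Y (br Y v)) = - (b * b) * gi z v" for v
        using AAsym[of z v] zc by (simp add: G.lmul bilinear_lneg[OF G.bil])
      have "0 = gi z (br Y (br Y (br Y (br Y w))) + (2 * (p + q)) *\<^sub>R br Y (br Y w) + ((p - q) * (p - q)) *\<^sub>R w)"
        unfolding poly by (simp add: G.rzero)
      also have "\<dots> = ((b * b) * (b * b) - 2 * (p + q) * (b * b) + (p - q) * (p - q)) * gi z w"
        by (simp add: G.gsimps g1 algebra_simps)
      finally have "((b * b) * (b * b) - 2 * (p + q) * (b * b) + (p - q) * (p - q)) * gi z w = 0" by simp
      moreover have "(b * b) * (b * b) - 2 * (p + q) * (b * b) + (p - q) * (p - q) \<noteq> 0"
        by (rule real_factor_ne) (use ax ay Bge p_def q_def in auto)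
      ultimately show ?thesis by simp
    qed
  qed
  have zP: "z \<in> span {br a b | a b. \<theta> a = - a \<and> \<theta> b = - b}"
    by (rule k_span[OF sig comm noncpt irred zk])
  have PQ: "{br a b | a b. \<theta> a = - a \<and> \<theta> b = - b} \<subseteq> span Q"
  proof
    fix w assume "w \<in> {br a b | a b. \<theta> a = - a \<and> \<theta> b = - b}"
    then obtain a b where w: "w = br a b" and a: "a \<in> Ms" and b: "b \<in> Ms" unfolding Ms_def by blast
    have aE: "a \<in> span EMs" and bE: "b \<in> span EMs" using a b MsE by auto
    have xb: "br x b \<in> span Q" if "x \<in> EMs" for x
      by (rule lin_span[OF linr[of x] _ bE]) (use that in \<open>auto simp: Q_def intro: span_base\<close>)
    have "(\<lambda>X. br X b) a \<in> span Q"
      by (rule lin_span[OF linl[of b] _ aE]) (use xb in auto)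
    thus "w \<in> span Q" using w by simp
  qed
  have "z \<in> span Q" using zP span_minimal[OF PQ subspace_span] by blast
  moreover have "linear (gi z)" using G.bil unfolding bilinear_def by simp
  ultimately have "gi z z \<in> span ({} :: real set)"
    by (rule lin_span[of "gi z" Q "{}" z, rotated 2]) (use Q0 span_empty in auto)
  hence "gi z z = 0" by simp
  thus False using G.pos[OF znz] by simp
qed

end


lemma sq_lt_abs: fixes b :: real assumes "b * b < pi * pi" shows "\<bar>b\<bar> < pi"
proof (rule ccontr)
  assume "\<not> \<bar>b\<bar> < pi"
  hence "pi \<le> \<bar>b\<bar>" by simp
  hence "pi * pi \<le> \<bar>b\<bar> * \<bar>b\<bar>" using pi_gt_zero by (intro mult_mono) auto
  thus False using assms by (simp add: abs_mult_self)
qed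

theorem lemma1:
  fixes br :: "'a::euclidean_space \<Rightarrow> 'a \<Rightarrow> 'a"
    and \<sigma> \<theta> :: "'a \<Rightarrow> 'a"
    and t :: "'a set"
    and Y :: 'a
  assumes ss: "semisimple br"
    and sig: "lie_involution br \<sigma>"
    and cart: "cartan_involution br \<theta>"
    and comm: "\<sigma> \<circ> \<theta> = \<theta> \<circ> \<sigma>"
    and noncpt: "\<not> compact_lie br"
    and irred: "\<And>I. lie_ideal br I \<Longrightarrow> \<sigma> ` I \<subseteq> I \<Longrightarrow> I = {0} \<or> I = UNIV"
    and tmax: "max_abelian_in br t (eigsp \<theta> 1 \<inter> eigsp \<sigma> (-1))"
    and Y: "Y \<in> t_plus br t (eigsp \<theta> (-1))"
  shows "\<forall>\<beta>\<in>roots br t. \<bar>\<beta> Y\<bar> < pi"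
proof -
  have la: "lie_algebra br" using ss unfolding semisimple_def by simp
  interpret C: cartan br \<theta> by unfold_locales (fact la cart)+
  have tab: "\<And>Z1 Z2. Z1 \<in> t \<Longrightarrow> Z2 \<in> t \<Longrightarrow> br Z1 Z2 = 0"
    using tmax unfolding max_abelian_in_def abelian_sub_def by blast
  have tk: "\<And>Z. Z \<in> t \<Longrightarrow> \<theta> Z = Z"
    using tmax unfolding max_abelian_in_def eigsp_def by auto
  have Yt: "Y \<in> t" and troot: "\<And>\<beta>. \<beta> \<in> roots_m br t (eigsp \<theta> (-1)) \<Longrightarrow> \<bar>\<beta> Y\<bar> < pi/2"
    using Y unfolding t_plus_def by auto
  show ?thesis
  proof
    fix \<beta> assume "\<beta> \<in> roots br t"
    hence blin: "linear \<beta>" and bne: "\<exists>Y\<in>t. \<beta> Y \<noteq> 0" and rs: "root_space_C br t \<beta> \<noteq> {(0, 0)}"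
      unfolding roots_def by auto
    have "(0, 0) \<in> root_space_C br t \<beta>" unfolding root_space_C_def by (simp add: C.brsimps)
    then obtain P where P: "P \<in> root_space_C br t \<beta>" "P \<noteq> (0, 0)"
      using rs by blast
    then obtain X1 X2 where X: "(X1, X2) \<in> root_space_C br t \<beta>" and nz: "(X1, X2) \<noteq> (0, 0)"
      by (cases P) auto
    have hr1: "br Z X1 = - \<beta> Z *\<^sub>R X2" and hr2: "br Z X2 = \<beta> Z *\<^sub>R X1" if "Z \<in> t" for Z
      using X that unfolding root_space_C_def by auto
    have thc: "\<theta> (br Z u) = br Z (\<theta> u)" if "Z \<in> t" for Z u using C.th_hom tk[OF that] by simp
    define N1 where "N1 = X1 - \<theta> X1"
    define N2 where "N2 = X2 - \<theta> X2"
    show "\<bar>\<beta> Y\<bar> < pi"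
    proof (cases "(N1, N2) = (0, 0)")
      case False
      have n1: "br Z N1 = - \<beta> Z *\<^sub>R N2" if Zt: "Z \<in> t" for Z
      proof -
        have "br Z N1 = br Z X1 - \<theta> (br Z X1)" unfolding N1_def thc[OF Zt] by (simp add: C.brsimps)
        also have "\<dots> = - \<beta> Z *\<^sub>R N2" unfolding hr1[OF Zt] N2_def by (simp add: C.thsimps algebra_simps)
        finally show ?thesis .
      qed
      have n2: "br Z N2 = \<beta> Z *\<^sub>R N1" if Zt: "Z \<in> t" for Z
      proof -
        have "br Z N2 = br Z X2 - \<theta> (br Z X2)" unfolding N2_def thc[OF Zt] by (simp add: C.brsimps)
        also have "\<dots> = \<beta> Z *\<^sub>R N1" unfolding hr2[OF Zt] N1_def by (simp add: C.thsimps algebra_simps)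
        finally show ?thesis .
      qed
      have m1: "\<theta> N1 = - N1" and m2: "\<theta> N2 = - N2" unfolding N1_def N2_def by (simp_all add: C.thsimps)
      have "\<beta> \<in> roots_m br t (eigsp \<theta> (-1))"
        unfolding roots_m_def
      proof (intro CollectI conjI)
        show "linear \<beta>" by (rule blin)
        show "\<exists>Y\<in>t. \<beta> Y \<noteq> 0" by (rule bne)
        have "(N1, N2) \<in> root_space_C br t \<beta> \<inter> eigsp \<theta> (- 1) \<times> eigsp \<theta> (- 1)"
          unfolding root_space_C_def eigsp_def using n1 n2 m1 m2 by auto
        then show "root_space_C br t \<beta> \<inter> eigsp \<theta> (- 1) \<times> eigsp \<theta> (- 1) \<noteq> {(0, 0)}"
          using False by auto
      qed
      hence "\<bar>\<beta> Y\<bar> < pi/2" by (rule troot)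
      thus ?thesis using pi_gt_zero by linarith
    next
      case True
      hence k1: "\<theta> X1 = X1" and k2: "\<theta> X2 = X2" unfolding N1_def N2_def by auto
      define b where "b = \<beta> Y"
      have a1: "br Y (br Y X1) = (- (b * b)) *\<^sub>R X1"
        unfolding hr1[OF Yt] by (simp add: C.brsimps hr2[OF Yt] b_def)
      have a2: "br Y (br Y X2) = (- (b * b)) *\<^sub>R X2"
        unfolding hr2[OF Yt] by (simp add: C.brsimps hr1[OF Yt] b_def)
      have "b * b < pi * pi"
      proof (cases "X1 = 0")
        case False
        show ?thesis
          by (rule C.stepB[where t=t and Y=Y and z=X1 and \<sigma>=\<sigma>])
            (fact tab tk Yt troot sig comm noncpt irred k1 False a1)+
      next
        case True
        hence "X2 \<noteq> 0" using nz by simp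
        show ?thesis
          by (rule C.stepB[where t=t and Y=Y and z=X2 and \<sigma>=\<sigma>])
            (fact tab tk Yt troot sig comm noncpt irred k2 \<open>X2 \<noteq> 0\<close> a2)+
      qed
      thus ?thesis unfolding b_def by (rule sq_lt_abs)
    qed
  qed
qed


end
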